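(* Let $(V,E)$ be a finite connected bipartite graph with parts $V=V_1\cup V_2$ and positive edge weight function $m$, and let $\lambda$ be its spectral expansion. Let $U\subseteq V_1$ be non-empty, $N(U)=\{v\in V_2:\exists u\in U,\ \{u,v\}\in E\}$, $0<\delta<1$, and let $W\subseteq N(U)$ be such that for every $u\in U$, $$\frac{\sum_{v\in W,\ \{u,v\}\in E}m(\{u,v\})}{m(u)}\ge\delta.$$ Then $$\frac{m(U)}{m(W)}\le\frac{4}{3\delta}\left(\frac{2\lambda}{\sqrt{\delta}}+\frac{m(U)}{m(V_1)}\right).$$
   Context: For a weighted graph, $m(v)=\sum_{e\ni v}m(e)$ and $m(S)=\sum_{v\in S}m(v)$ for a vertex set $S$. Let $\ell^2(V)$ be the real functions on $V$ with inner product $\langle\phi,\psi\rangle=\sum_v m(v)\phi(v)\psi(v)$, and let $M$ be the random walk operator $M\phi(v)=\frac1{m(v)}\sum_{u:\{u,v\}\in E}m(\{u,v\})\phi(u)$. For a bipartite graph with parts $V_1,V_2$, the spectral expansion $\lambda$ is the largest absolute value of an eigenvalue of $M$ restricted to the orthogonal complement of $\operatorname{span}\{\mathbb{1}_{V_1},\mathbb{1}_{V_2}\}$ (equivalently, the smallest $\lambda$ with $\|M\phi\|\le\lambda\|\phi\|$ for all $\phi\perp\mathbb{1}_{V_1},\mathbb{1}_{V_2}$). *)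

theory Defs
  imports "HOL-Analysis.Analysis"
begin

definition weighted_bipartite :: "'a set \<Rightarrow> 'a set \<Rightarrow> 'a set set \<Rightarrow> ('a set \<Rightarrow> real) \<Rightarrow> bool" where
  "weighted_bipartite V1 V2 E m \<longleftrightarrow>
     finite V1 \<and> finite V2 \<and> V1 \<inter> V2 = {} \<and>
     (\<forall>e\<in>E. \<exists>u\<in>V1. \<exists>v\<in>V2. e = {u, v}) \<and>
     (\<forall>e\<in>E. m e > 0)"

definition graph_connected :: "'a set \<Rightarrow> 'a set set \<Rightarrow> bool" where
  "graph_connected V E \<longleftrightarrow> (\<forall>u\<in>V. \<forall>v\<in>V. (\<lambda>x y. {x, y} \<in> E)\<^sup>*\<^sup>* u v)"

definition vweight :: "'a set set \<Rightarrow> ('a set \<Rightarrow> real) \<Rightarrow> 'a \<Rightarrow> real" where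
  "vweight E m v = (\<Sum>e\<in>{e\<in>E. v \<in> e}. m e)"

definition setweight :: "'a set set \<Rightarrow> ('a set \<Rightarrow> real) \<Rightarrow> 'a set \<Rightarrow> real" where
  "setweight E m S = (\<Sum>v\<in>S. vweight E m v)"

definition l2_inner :: "'a set \<Rightarrow> 'a set set \<Rightarrow> ('a set \<Rightarrow> real) \<Rightarrow> ('a \<Rightarrow> real) \<Rightarrow> ('a \<Rightarrow> real) \<Rightarrow> real" where
  "l2_inner V E m \<phi> \<psi> = (\<Sum>v\<in>V. vweight E m v * \<phi> v * \<psi> v)"

definition l2_norm :: "'a set \<Rightarrow> 'a set set \<Rightarrow> ('a set \<Rightarrow> real) \<Rightarrow> ('a \<Rightarrow> real) \<Rightarrow> real" where
  "l2_norm V E m \<phi> = sqrt (l2_inner V E m \<phi> \<phi>)"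

definition walk_op :: "'a set \<Rightarrow> 'a set set \<Rightarrow> ('a set \<Rightarrow> real) \<Rightarrow> ('a \<Rightarrow> real) \<Rightarrow> 'a \<Rightarrow> real" where
  "walk_op V E m \<phi> v = (1 / vweight E m v) * (\<Sum>u\<in>{u\<in>V. {u, v} \<in> E}. m {u, v} * \<phi> u)"

definition spectral_expansion :: "'a set \<Rightarrow> 'a set \<Rightarrow> 'a set set \<Rightarrow> ('a set \<Rightarrow> real) \<Rightarrow> real" where
  "spectral_expansion V1 V2 E m =
     Inf {l. l \<ge> 0 \<and> (\<forall>\<phi>.
        l2_inner (V1 \<union> V2) E m \<phi> (indicator V1) = 0 \<longrightarrow>
        l2_inner (V1 \<union> V2) E m \<phi> (indicator V2) = 0 \<longrightarrow>
        l2_norm (V1 \<union> V2) E m (walk_op (V1 \<union> V2) E m \<phi>) \<le> l * l2_norm (V1 \<union> V2) E m \<phi>)}"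

definition nbhd :: "'a set \<Rightarrow> 'a set set \<Rightarrow> 'a set \<Rightarrow> 'a set" where
  "nbhd V2 E U = {v\<in>V2. \<exists>u\<in>U. {u, v} \<in> E}"

end

theory Submission imports Defs begin

lemma wb_facts:
  assumes "weighted_bipartite V1 V2 E m"
  shows "finite V1" "finite V2" "V1 \<inter> V2 = {}"
    "\<And>e. e \<in> E \<Longrightarrow> \<exists>u\<in>V1. \<exists>v\<in>V2. e = {u, v}"
    "\<And>e. e \<in> E \<Longrightarrow> m e > 0"
  using assms unfolding weighted_bipartite_def by auto

lemma vweight_nonneg:
  assumes "weighted_bipartite V1 V2 E m"
  shows "vweight E m v \<ge> 0"
  unfolding vweight_def using wb_facts(5)[OF assms]
  by (intro sum_nonneg) (auto intro: less_imp_le)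

lemma nb_sum:
  assumes "weighted_bipartite V1 V2 E m"
  shows "(\<Sum>u\<in>{u\<in>V1 \<union> V2. {u, v} \<in> E}. m {u, v}) = vweight E m v"
proof -
  have "bij_betw (\<lambda>u. {u, v}) {u\<in>V1 \<union> V2. {u, v} \<in> E} {e\<in>E. v \<in> e}"
  proof (rule bij_betwI')
    fix x y assume "x \<in> {u\<in>V1 \<union> V2. {u, v} \<in> E}" "y \<in> {u\<in>V1 \<union> V2. {u, v} \<in> E}"
    then show "({x, v} = {y, v}) = (x = y)" by (auto simp: doubleton_eq_iff)
  next
    fix x assume "x \<in> {u\<in>V1 \<union> V2. {u, v} \<in> E}"
    then show "{x, v} \<in> {e\<in>E. v \<in> e}" by auto
  next
    fix e assume e: "e \<in> {e\<in>E. v \<in> e}"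
    then obtain a b where ab: "a \<in> V1" "b \<in> V2" "e = {a, b}" using wb_facts(4)[OF assms] by blast
    have "a \<noteq> b" using ab wb_facts(3)[OF assms] by auto
    show "\<exists>x\<in>{u\<in>V1 \<union> V2. {u, v} \<in> E}. e = {x, v}"
    proof (cases "v = a")
      case True
      then show ?thesis using ab e by (intro bexI[of _ b]) (auto simp: insert_commute)
    next
      case False
      then have "v = b" using ab e by auto
      then show ?thesis using ab e by (intro bexI[of _ a]) auto
    qed
  qed
  then show ?thesis unfolding vweight_def
    by (subst sum.reindex_bij_betw[symmetric]) auto
qed

lemma nb_sub1:
  assumes "weighted_bipartite V1 V2 E m" "v \<in> V2"
  shows "{u\<in>V1 \<union> V2. {u, v} \<in> E} \<subseteq> V1"
proof
  fix u assume u: "u \<in> {u\<in>V1 \<union> V2. {u, v} \<in> E}"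
  then obtain a b where ab: "a \<in> V1" "b \<in> V2" "{u, v} = {a, b}" using wb_facts(4)[OF assms(1)] by blast
  then show "u \<in> V1" using assms(2) wb_facts(3)[OF assms(1)] by (auto simp: doubleton_eq_iff)
qed

lemma swap_nb:
  assumes "finite A" "finite B"
  shows "(\<Sum>v\<in>A. \<Sum>u\<in>{u\<in>B. {u, v} \<in> E}. f u v) = (\<Sum>u\<in>B. \<Sum>v\<in>{v\<in>A. {u, v} \<in> E}. f u v)"
proof -
  have "(\<Sum>v\<in>A. \<Sum>u\<in>{u\<in>B. {u, v} \<in> E}. f u v) = (\<Sum>v\<in>A. \<Sum>u\<in>B. if {u, v} \<in> E then f u v else 0)"
    using assms by (simp add: sum.inter_filter)
  also have "\<dots> = (\<Sum>u\<in>B. \<Sum>v\<in>A. if {u, v} \<in> E then f u v else 0)"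
    by (rule sum.swap)
  also have "\<dots> = (\<Sum>u\<in>B. \<Sum>v\<in>{v\<in>A. {u, v} \<in> E}. f u v)"
    using assms by (simp add: sum.inter_filter)
  finally show ?thesis .
qed

lemma l2_cs:
  assumes "finite V" "\<And>v. vweight E m v \<ge> 0"
  shows "l2_inner V E m \<phi> \<psi> \<le> l2_norm V E m \<phi> * l2_norm V E m \<psi>"
proof -
  let ?w = "vweight E m"
  have "l2_inner V E m \<phi> \<psi> \<le> (\<Sum>v\<in>V. \<bar>sqrt (?w v) * \<phi> v\<bar> * \<bar>sqrt (?w v) * \<psi> v\<bar>)"
    unfolding l2_inner_def
  proof (rule sum_mono)
    fix v
    have "?w v * \<phi> v * \<psi> v = (sqrt (?w v) * \<phi> v) * (sqrt (?w v) * \<psi> v)"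
      using assms(2)[of v] by (simp add: algebra_simps)
    then show "?w v * \<phi> v * \<psi> v \<le> \<bar>sqrt (?w v) * \<phi> v\<bar> * \<bar>sqrt (?w v) * \<psi> v\<bar>"
      by (metis abs_ge_self abs_mult)
  qed
  also have "\<dots> \<le> L2_set (\<lambda>v. sqrt (?w v) * \<phi> v) V * L2_set (\<lambda>v. sqrt (?w v) * \<psi> v) V"
    by (rule L2_set_mult_ineq)
  also have "L2_set (\<lambda>v. sqrt (?w v) * \<phi> v) V = l2_norm V E m \<phi>"
    unfolding L2_set_def l2_norm_def l2_inner_def using assms(2)
    by (intro arg_cong[where f=sqrt] sum.cong refl) (simp add: power_mult_distrib power2_eq_square[symmetric])
  also have "L2_set (\<lambda>v. sqrt (?w v) * \<psi> v) V = l2_norm V E m \<psi>"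
    unfolding L2_set_def l2_norm_def l2_inner_def using assms(2)
    by (intro arg_cong[where f=sqrt] sum.cong refl) (simp add: power_mult_distrib power2_eq_square[symmetric])
  finally show ?thesis .
qed


lemma cs_weighted:
  fixes c x :: "'a \<Rightarrow> real"
  assumes "finite A" "\<And>u. u \<in> A \<Longrightarrow> c u \<ge> 0"
  shows "(\<Sum>u\<in>A. c u * x u)\<^sup>2 \<le> (\<Sum>u\<in>A. c u) * (\<Sum>u\<in>A. c u * (x u)\<^sup>2)"
proof -
  have "\<bar>\<Sum>u\<in>A. c u * x u\<bar> \<le> (\<Sum>u\<in>A. \<bar>c u * x u\<bar>)" by (rule sum_abs)
  also have "\<dots> = (\<Sum>u\<in>A. \<bar>sqrt (c u)\<bar> * \<bar>sqrt (c u) * x u\<bar>)"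
  proof (rule sum.cong[OF refl])
    fix u assume "u \<in> A"
    then have "c u = sqrt (c u) * sqrt (c u)" using assms(2) by simp
    then show "\<bar>c u * x u\<bar> = \<bar>sqrt (c u)\<bar> * \<bar>sqrt (c u) * x u\<bar>"
      by (metis abs_mult mult.assoc)
  qed
  also have "\<dots> \<le> L2_set (\<lambda>u. sqrt (c u)) A * L2_set (\<lambda>u. sqrt (c u) * x u) A"
    by (rule L2_set_mult_ineq)
  finally have h: "\<bar>\<Sum>u\<in>A. c u * x u\<bar> \<le> L2_set (\<lambda>u. sqrt (c u)) A * L2_set (\<lambda>u. sqrt (c u) * x u) A" .
  have "(\<Sum>u\<in>A. c u * x u)\<^sup>2 = \<bar>\<Sum>u\<in>A. c u * x u\<bar>\<^sup>2" by simp
  also have "\<dots> \<le> (L2_set (\<lambda>u. sqrt (c u)) A * L2_set (\<lambda>u. sqrt (c u) * x u) A)\<^sup>2"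
    using h by (intro power_mono) auto
  also have "\<dots> = (L2_set (\<lambda>u. sqrt (c u)) A)\<^sup>2 * (L2_set (\<lambda>u. sqrt (c u) * x u) A)\<^sup>2"
    by (simp add: power_mult_distrib)
  also have "(L2_set (\<lambda>u. sqrt (c u)) A)\<^sup>2 = (\<Sum>u\<in>A. c u)"
    unfolding L2_set_def using assms
    by (subst real_sqrt_pow2) (auto intro: sum_nonneg)
  also have "(L2_set (\<lambda>u. sqrt (c u) * x u) A)\<^sup>2 = (\<Sum>u\<in>A. c u * (x u)\<^sup>2)"
    unfolding L2_set_def using assms
    by (subst real_sqrt_pow2) (auto intro!: sum_nonneg sum.cong simp: power_mult_distrib)
  finally show ?thesis .
qed

lemma walk_contract:
  assumes wb: "weighted_bipartite V1 V2 E m"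
  shows "l2_norm (V1 \<union> V2) E m (walk_op (V1 \<union> V2) E m \<phi>) \<le> l2_norm (V1 \<union> V2) E m \<phi>"
proof -
  let ?V = "V1 \<union> V2"
  let ?w = "vweight E m"
  let ?N = "\<lambda>v. {u\<in>?V. {u, v} \<in> E}"
  let ?T = "\<lambda>v. (\<Sum>u\<in>?N v. m {u, v} * (\<phi> u)\<^sup>2)"
  have fin: "finite ?V" using wb_facts[OF wb] by auto
  have mpos: "\<And>u v. u \<in> ?N v \<Longrightarrow> m {u, v} \<ge> 0" using wb_facts(5)[OF wb] by (auto intro: less_imp_le)
  have trm: "?w v * (walk_op ?V E m \<phi> v) * (walk_op ?V E m \<phi> v) \<le> ?T v" for v
  proof (cases "?w v = 0")
    case True
    then show ?thesis using mpos by (auto intro!: sum_nonneg)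
  next
    case False
    then have wp: "?w v > 0" using vweight_nonneg[OF wb, of v] by auto
    let ?S = "\<Sum>u\<in>?N v. m {u, v} * \<phi> u"
    have "?S\<^sup>2 \<le> (\<Sum>u\<in>?N v. m {u, v}) * ?T v"
      using fin mpos by (intro cs_weighted) auto
    also have "(\<Sum>u\<in>?N v. m {u, v}) = ?w v" by (rule nb_sum[OF wb])
    finally have "?S\<^sup>2 \<le> ?w v * ?T v" .
    moreover have "?w v * (walk_op ?V E m \<phi> v) * (walk_op ?V E m \<phi> v) = ?S\<^sup>2 / ?w v"
      unfolding walk_op_def using wp by (simp add: power2_eq_square field_simps)
    ultimately show ?thesis using wp by (simp add: divide_le_eq mult.commute)
  qed
  have "l2_inner ?V E m (walk_op ?V E m \<phi>) (walk_op ?V E m \<phi>) \<le> (\<Sum>v\<in>?V. ?T v)"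
    unfolding l2_inner_def by (rule sum_mono) (rule trm)
  also have "\<dots> = (\<Sum>u\<in>?V. \<Sum>v\<in>{v\<in>?V. {u, v} \<in> E}. m {u, v} * (\<phi> u)\<^sup>2)"
    by (rule swap_nb[OF fin fin])
  also have "\<dots> = (\<Sum>u\<in>?V. ?w u * \<phi> u * \<phi> u)"
  proof (rule sum.cong[OF refl])
    fix u
    have "(\<Sum>v\<in>{v\<in>?V. {u, v} \<in> E}. m {u, v} * (\<phi> u)\<^sup>2) = (\<Sum>v\<in>{v\<in>?V. {v, u} \<in> E}. m {v, u}) * (\<phi> u)\<^sup>2"
      by (simp add: sum_distrib_right insert_commute)
    also have "\<dots> = ?w u * (\<phi> u)\<^sup>2" using nb_sum[OF wb, of u] by simp
    finally show "(\<Sum>v\<in>{v\<in>?V. {u, v} \<in> E}. m {u, v} * (\<phi> u)\<^sup>2) = ?w u * \<phi> u * \<phi> u"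
      by (simp add: power2_eq_square)
  qed
  also have "\<dots> = l2_inner ?V E m \<phi> \<phi>" unfolding l2_inner_def ..
  finally show ?thesis unfolding l2_norm_def by simp
qed

lemma spec_prop:
  assumes wb: "weighted_bipartite V1 V2 E m"
  defines "lam \<equiv> spectral_expansion V1 V2 E m"
  shows "lam \<ge> 0"
    and "\<And>\<phi>. l2_inner (V1 \<union> V2) E m \<phi> (indicator V1) = 0 \<Longrightarrow>
        l2_inner (V1 \<union> V2) E m \<phi> (indicator V2) = 0 \<Longrightarrow>
        l2_norm (V1 \<union> V2) E m (walk_op (V1 \<union> V2) E m \<phi>) \<le> lam * l2_norm (V1 \<union> V2) E m \<phi>"
proof -
  define S where "S = {l. l \<ge> 0 \<and> (\<forall>\<phi>.
        l2_inner (V1 \<union> V2) E m \<phi> (indicator V1) = 0 \<longrightarrow>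
        l2_inner (V1 \<union> V2) E m \<phi> (indicator V2) = 0 \<longrightarrow>
        l2_norm (V1 \<union> V2) E m (walk_op (V1 \<union> V2) E m \<phi>) \<le> l * l2_norm (V1 \<union> V2) E m \<phi>)}"
  have lamS: "lam = Inf S" unfolding lam_def spectral_expansion_def S_def ..
  have oneS: "1 \<in> S" unfolding S_def using walk_contract[OF wb] by auto
  have bdd: "bdd_below S" unfolding S_def by (rule bdd_belowI[of _ 0]) auto
  have Sne: "S \<noteq> {}" using oneS by auto
  show "lam \<ge> 0" unfolding lamS by (rule cInf_greatest[OF Sne]) (simp add: S_def)
  fix \<phi>
  assume o1: "l2_inner (V1 \<union> V2) E m \<phi> (indicator V1) = 0"
    and o2: "l2_inner (V1 \<union> V2) E m \<phi> (indicator V2) = 0"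
  let ?a = "l2_norm (V1 \<union> V2) E m (walk_op (V1 \<union> V2) E m \<phi>)"
  let ?b = "l2_norm (V1 \<union> V2) E m \<phi>"
  have hl: "\<And>l. l \<in> S \<Longrightarrow> ?a \<le> l * ?b" unfolding S_def using o1 o2 by auto
  have bnn: "?b \<ge> 0" unfolding l2_norm_def l2_inner_def
    using vweight_nonneg[OF wb] by (auto intro!: sum_nonneg simp: mult.assoc)
  show "?a \<le> lam * ?b"
  proof (cases "?b = 0")
    case True
    then show ?thesis using hl[OF oneS] by simp
  next
    case False
    then have bp: "?b > 0" using bnn by simp
    have "?a / ?b \<le> Inf S"
      using hl bp by (intro cInf_greatest[OF Sne]) (simp add: divide_le_eq mult.commute)
    then show ?thesis unfolding lamS using bp by (simp add: divide_le_eq)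
  qed
qed


lemma sum_ind:
  fixes g :: "'a \<Rightarrow> real"
  assumes "finite V"
  shows "(\<Sum>v\<in>V. g v * indicator S v) = sum g (V \<inter> S)"
  using assms by (simp add: sum.inter_restrict indicator_def if_distrib cong: if_cong)

lemma final_alg:
  fixes A B C lam d e b :: real
  assumes "A > 0" "B > 0" "C > 0" "lam \<ge> 0" "d > 0"
    and "d * A \<le> e" "e \<le> B" "e - b * B \<le> lam * sqrt A * sqrt B" "b = A / C"
  shows "A / B \<le> 4 / (3 * d) * (2 * lam / sqrt d + A / C)"
proof -
  define x where "x = A / B"
  have xp: "x > 0" using assms unfolding x_def by simp
  have "d * x \<le> 1" using assms unfolding x_def by (simp add: field_simps)
  then have "x \<le> 1 / d" using assms(5) by (simp add: field_simps)
  then have sx: "sqrt x \<le> 1 / sqrt d" using assms(5) by (metis real_sqrt_divide real_sqrt_le_iff real_sqrt_one)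
  have "d * A \<le> b * B + lam * sqrt A * sqrt B" using assms by linarith
  then have "d * A / B \<le> b + lam * sqrt A * sqrt B / B" using assms(2) by (simp add: field_simps)
  moreover have "sqrt A * sqrt B / B = sqrt x"
    unfolding x_def using assms(1,2)
    by (simp add: real_sqrt_divide field_simps)
  ultimately have "d * x \<le> b + lam * sqrt x" unfolding x_def by (metis times_divide_eq_right mult.assoc)
  also have "lam * sqrt x \<le> lam / sqrt d" using sx assms(4) by (metis mult_left_mono times_divide_eq_right mult.right_neutral)
  finally have "d * x \<le> b + lam / sqrt d" by simp
  then have "x \<le> (b + lam / sqrt d) / d" using assms(5) by (simp add: field_simps)
  also have "\<dots> \<le> 4 / (3 * d) * (2 * lam / sqrt d + b)"
  proof -
    have "b \<ge> 0" using assms by simp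
    moreover have "lam / sqrt d \<ge> 0" using assms by simp
    ultimately have "b + lam / sqrt d \<le> 4 / 3 * (2 * (lam / sqrt d) + b)" unfolding ring_distribs by linarith
    then have "(b + lam / sqrt d) / d \<le> (4 / 3 * (2 * (lam / sqrt d) + b)) / d"
      using assms(5) by (intro divide_right_mono) auto
    also have "\<dots> = 4 / (3 * d) * (2 * lam / sqrt d + b)" by simp
    finally show ?thesis .
  qed
  finally show ?thesis unfolding x_def using assms(9) by simp
qed


theorem lemma7p8:
  fixes V1 V2 :: "'a set" and E :: "'a set set" and m :: "'a set \<Rightarrow> real"
    and U W :: "'a set" and \<delta> :: real
  assumes "weighted_bipartite V1 V2 E m"
    and "graph_connected (V1 \<union> V2) E"
    and "U \<subseteq> V1" and "U \<noteq> {}"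
    and "0 < \<delta>" and "\<delta> < 1"
    and "W \<subseteq> nbhd V2 E U"
    and "\<forall>u\<in>U. (\<Sum>v\<in>{v\<in>W. {u, v} \<in> E}. m {u, v}) / vweight E m u \<ge> \<delta>"
  shows "setweight E m U / setweight E m W
           \<le> 4 / (3 * \<delta>) * (2 * spectral_expansion V1 V2 E m / sqrt \<delta>
                             + setweight E m U / setweight E m V1)"
proof -
  note wb = assms(1)
  let ?V = "V1 \<union> V2"
  let ?w = "vweight E m"
  let ?N = "\<lambda>v. {u\<in>?V. {u, v} \<in> E}"
  define lam where "lam = spectral_expansion V1 V2 E m"
  define mU where "mU = setweight E m U"
  define mW where "mW = setweight E m W"
  define mV1 where "mV1 = setweight E m V1"
  have finV: "finite ?V" and fin1: "finite V1" and fin2: "finite V2" and disj: "V1 \<inter> V2 = {}"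
    using wb_facts[OF wb] by auto
  have WV2: "W \<subseteq> V2" using assms(7) unfolding nbhd_def by auto
  have finU: "finite U" using assms(3) fin1 finite_subset by blast
  have finW: "finite W" using WV2 fin2 finite_subset by blast
  have wnn: "\<And>v. ?w v \<ge> 0" by (rule vweight_nonneg[OF wb])
  have mnn: "\<And>e. e \<in> E \<Longrightarrow> m e \<ge> 0" using wb_facts(5)[OF wb] by (auto intro: less_imp_le)
  define s where "s = (\<lambda>u. \<Sum>v\<in>{v\<in>W. {u, v} \<in> E}. m {u, v})"
  have wpos: "?w u > 0" and su: "s u \<ge> \<delta> * ?w u" if "u \<in> U" for u
  proof -
    have h: "s u / ?w u \<ge> \<delta>" using assms(8) that unfolding s_def by auto
    show "?w u > 0"
    proof (rule ccontr)
      assume "\<not> ?w u > 0"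
      then have "?w u = 0" using wnn[of u] by simp
      then show False using h assms(5) by simp
    qed
    then show "s u \<ge> \<delta> * ?w u" using h by (simp add: field_simps)
  qed
  have mUpos: "mU > 0" unfolding mU_def setweight_def
    using finU assms(4) wpos by (intro sum_pos) auto
  have mV1pos: "mV1 > 0"
  proof -
    have "mU \<le> mV1" unfolding mU_def mV1_def setweight_def
      using fin1 assms(3) wnn by (intro sum_mono2) auto
    then show ?thesis using mUpos by simp
  qed
  define e where "e = (\<Sum>v\<in>W. \<Sum>u\<in>{u\<in>U. {u, v} \<in> E}. m {u, v})"
  have "e = (\<Sum>u\<in>U. s u)" unfolding e_def s_def by (rule swap_nb[OF finW finU])
  also have "\<dots> \<ge> (\<Sum>u\<in>U. \<delta> * ?w u)" using su by (intro sum_mono) auto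
  finally have e_lo: "\<delta> * mU \<le> e" unfolding mU_def setweight_def by (simp add: sum_distrib_left)
  have inner_le: "(\<Sum>u\<in>{u\<in>U. {u, v} \<in> E}. m {u, v}) \<le> ?w v" for v
  proof -
    have "(\<Sum>u\<in>{u\<in>U. {u, v} \<in> E}. m {u, v}) \<le> (\<Sum>u\<in>?N v. m {u, v})"
      using finV assms(3) mnn by (intro sum_mono2) auto
    then show ?thesis using nb_sum[OF wb] by simp
  qed
  have e_hi: "e \<le> mW" unfolding e_def mW_def setweight_def
    by (intro sum_mono inner_le)
  define b where "b = mU / mV1"
  have bnn: "b \<ge> 0" unfolding b_def using mUpos mV1pos by simp
  define f where "f = (\<lambda>x. indicator U x - b * indicator V1 x :: real)"
  have ip_ind: "l2_inner ?V E m \<phi> (indicator S) = (\<Sum>v\<in>S. ?w v * \<phi> v)" if "S \<subseteq> ?V" for \<phi> S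
  proof -
    have "l2_inner ?V E m \<phi> (indicator S) = sum (\<lambda>v. ?w v * \<phi> v) (?V \<inter> S)"
      unfolding l2_inner_def by (rule sum_ind[OF finV])
    also have "?V \<inter> S = S" using that by auto
    finally show ?thesis .
  qed
  have sU1: "(\<Sum>v\<in>V1. ?w v * indicator U v) = mU"
    unfolding mU_def setweight_def using sum_ind[OF fin1, of ?w U] assms(3)
    by (simp add: Int_absorb1)
  have o1: "l2_inner ?V E m f (indicator V1) = 0"
  proof -
    have "l2_inner ?V E m f (indicator V1) = (\<Sum>v\<in>V1. ?w v * f v)" by (rule ip_ind) auto
    also have "\<dots> = (\<Sum>v\<in>V1. ?w v * indicator U v - b * ?w v)"
      unfolding f_def by (intro sum.cong refl) (simp add: algebra_simps)
    also have "\<dots> = mU - b * mV1"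
      using sU1 by (simp add: sum_subtractf sum_distrib_left mV1_def setweight_def)
    also have "\<dots> = 0" unfolding b_def using mV1pos by simp
    finally show ?thesis .
  qed
  have o2: "l2_inner ?V E m f (indicator V2) = 0"
  proof -
    have "l2_inner ?V E m f (indicator V2) = (\<Sum>v\<in>V2. ?w v * f v)" by (rule ip_ind) auto
    also have "\<dots> = 0"
      using disj assms(3) unfolding f_def by (intro sum.neutral) (auto simp: indicator_def)
    finally show ?thesis .
  qed
  have ff: "l2_inner ?V E m f f = l2_inner ?V E m f (indicator U) - b * l2_inner ?V E m f (indicator V1)"
    unfolding l2_inner_def f_def
    by (simp add: sum_subtractf sum_distrib_left sum.distrib algebra_simps)
  have fU: "l2_inner ?V E m f (indicator U) = (1 - b) * mU"
  proof -
    have "l2_inner ?V E m f (indicator U) = (\<Sum>v\<in>U. ?w v * f v)" using assms(3) by (intro ip_ind) auto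
    also have "\<dots> = (\<Sum>v\<in>U. (1 - b) * ?w v)"
      using assms(3) unfolding f_def by (intro sum.cong refl) (auto simp: indicator_def)
    also have "\<dots> = (1 - b) * mU" unfolding mU_def setweight_def by (simp add: sum_distrib_left)
    finally show ?thesis .
  qed
  have normf: "l2_norm ?V E m f \<le> sqrt mU"
  proof -
    have "b * mU \<ge> 0" using bnn mUpos by simp
    then have "l2_inner ?V E m f f \<le> mU" using ff fU o1 by (simp add: algebra_simps)
    then show ?thesis unfolding l2_norm_def by simp
  qed
  have lam0: "lam \<ge> 0" unfolding lam_def by (rule spec_prop(1)[OF wb])
  have Mf: "l2_norm ?V E m (walk_op ?V E m f) \<le> lam * sqrt mU"
  proof -
    have "l2_norm ?V E m (walk_op ?V E m f) \<le> lam * l2_norm ?V E m f"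
      unfolding lam_def by (rule spec_prop(2)[OF wb o1 o2])
    also have "\<dots> \<le> lam * sqrt mU" using normf lam0 by (rule mult_left_mono)
    finally show ?thesis .
  qed
  have normW: "l2_norm ?V E m (indicator W) = sqrt mW"
  proof -
    have "l2_inner ?V E m (indicator W) (indicator W) = (\<Sum>v\<in>W. ?w v * indicator W v)"
      using WV2 by (intro ip_ind) auto
    also have "\<dots> = mW" unfolding mW_def setweight_def by (simp add: indicator_def)
    finally show ?thesis unfolding l2_norm_def by simp
  qed
  have walk_lin: "walk_op ?V E m f v = walk_op ?V E m (indicator U) v - b * walk_op ?V E m (indicator V1) v" for v
    unfolding walk_op_def f_def by (simp add: sum_subtractf sum_distrib_left algebra_simps)
  have wU: "?w v * walk_op ?V E m (indicator U) v = (\<Sum>u\<in>{u\<in>U. {u, v} \<in> E}. m {u, v})" for v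
  proof -
    have "(\<Sum>u\<in>?N v. m {u, v} * indicator U u) = sum (\<lambda>u. m {u, v}) (?N v \<inter> U)"
      using finV by (intro sum_ind) auto
    also have "?N v \<inter> U = {u\<in>U. {u, v} \<in> E}" using assms(3) by auto
    finally have X: "(\<Sum>u\<in>?N v. m {u, v} * indicator U u) = (\<Sum>u\<in>{u\<in>U. {u, v} \<in> E}. m {u, v})" .
    show ?thesis
    proof (cases "?w v = 0")
      case True
      have "(\<Sum>u\<in>{u\<in>U. {u, v} \<in> E}. m {u, v}) \<ge> 0" using mnn by (intro sum_nonneg) auto
      then show ?thesis using inner_le[of v] True by simp
    next
      case False
      then show ?thesis unfolding walk_op_def using X by simp
    qed
  qed
  have wV1: "?w v * walk_op ?V E m (indicator V1) v = ?w v" if "v \<in> V2" for v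
  proof -
    have "(\<Sum>u\<in>?N v. m {u, v} * indicator V1 u) = sum (\<lambda>u. m {u, v}) (?N v \<inter> V1)"
      using finV by (intro sum_ind) auto
    also have "?N v \<inter> V1 = ?N v" using nb_sub1[OF wb that] by auto
    also have "sum (\<lambda>u. m {u, v}) (?N v) = ?w v" by (rule nb_sum[OF wb])
    finally have X: "(\<Sum>u\<in>?N v. m {u, v} * indicator V1 u) = ?w v" .
    show ?thesis unfolding walk_op_def using X by simp
  qed
  have ipMf: "l2_inner ?V E m (walk_op ?V E m f) (indicator W) = e - b * mW"
  proof -
    have "l2_inner ?V E m (walk_op ?V E m f) (indicator W) = (\<Sum>v\<in>W. ?w v * walk_op ?V E m f v)"
      using WV2 by (intro ip_ind) auto
    also have "\<dots> = (\<Sum>v\<in>W. (\<Sum>u\<in>{u\<in>U. {u, v} \<in> E}. m {u, v}) - b * ?w v)"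
    proof (intro sum.cong refl)
      fix v assume "v \<in> W"
      then have "v \<in> V2" using WV2 by auto
      then show "?w v * walk_op ?V E m f v = (\<Sum>u\<in>{u\<in>U. {u, v} \<in> E}. m {u, v}) - b * ?w v"
      proof -
        have "?w v * walk_op ?V E m f v = ?w v * walk_op ?V E m (indicator U) v - b * (?w v * walk_op ?V E m (indicator V1) v)"
          unfolding walk_lin by (simp add: algebra_simps)
        then show ?thesis using wU[of v] wV1[OF \<open>v \<in> V2\<close>] by simp
      qed
    qed
    also have "\<dots> = e - b * mW" unfolding e_def mW_def setweight_def
      by (simp add: sum_subtractf sum_distrib_left)
    finally show ?thesis .
  qed
  have "e - b * mW \<le> l2_norm ?V E m (walk_op ?V E m f) * l2_norm ?V E m (indicator W)"
    unfolding ipMf[symmetric] using finV wnn by (intro l2_cs) auto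
  also have "\<dots> \<le> lam * sqrt mU * sqrt mW"
    unfolding normW using Mf by (intro mult_right_mono) (auto simp: mW_def setweight_def intro!: sum_nonneg wnn)
  finally have key: "e - b * mW \<le> lam * sqrt mU * sqrt mW" .
  have mWpos: "mW > 0" using e_lo e_hi mUpos assms(5) by (smt (verit) mult_pos_pos)
  show ?thesis
    unfolding lam_def[symmetric] mU_def[symmetric] mW_def[symmetric] mV1_def[symmetric]
    by (rule final_alg[OF mUpos mWpos mV1pos lam0 assms(5) e_lo e_hi key b_def])
qed

end
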